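(* Consider $m$ agents $i=1,\ldots,m$ with data and weight matrix $W$ as described in the context. Fix $\hat{\delta}>0$, an integer $T\ge1$, and a time $t\ge\max(t_1,t_2,t_3)$, where $t_1=8n+16\log\frac{2}{\hat\delta}$, $t_2=\left(\frac{16\hat{\mu}(\sqrt{4n}+\sqrt{2\log\frac{2}{\hat\delta}})}{\sigma_x}\right)^2$, $t_3=2(n+l)\log\frac{1}{\hat\delta}$. On the event $E_3$ defined in the context, for all $i\in\{1,\ldots,m\}$, $$\|(\beta^T_{i,t+1})^{-1}-\bar\beta_{t+1}^{-1}\|\le(\rho(W))^T\frac{c_3}{t},$$ where $c_3=\frac{152m^{3/2}\sqrt{5n}}{\sigma_x^2}+\frac{64m^{3/2}\sqrt{5n}}{\sigma_x^4}\hat\mu^2$.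
   Context: Data model: each agent $i\in\{1,\dots,m\}$ observes at times $j=1,2,\ldots$ pairs $(x_{i,j},y_{i,j})$ with $y_{i,j}=\Theta x_{i,j}+\eta_{i,j}$, $\Theta\in\mathbb{R}^{l\times n}$ unknown, $x_{i,j}\sim\mathcal{N}(\mu_{i,j},\sigma_x^2I_n)$, $\eta_{i,j}\sim\mathcal{N}(0,\sigma_\eta^2I_l)$, all mutually independent over time and agents, with deterministic means and $\sup_{i,j}\|\mu_{i,j}\|=\hat\mu<\infty$; $\sigma_x,\sigma_\eta>0$. The agents communicate over an undirected connected graph; $W\in\mathbb{R}^{m\times m}$ satisfies: $W(i,j)\ge0$, $W(i,j)=0$ if $j$ is not a neighbor of $i$ and $i\ne j$, $W\mathbf 1_m=\mathbf 1_m$, $W=W^*$, and $\rho(W)=\max\{\lambda_2(W),-\lambda_m(W)\}<1$, where $\lambda_1(W)\ge\cdots\ge\lambda_m(W)$ are the (real) eigenvalues of $W$. Define $\beta_{i,t+1}=\sum_{j=1}^tx_{i,j}x_{i,j}^*$, $\bar\beta_{t+1}=\frac1m\sum_{i=1}^m\beta_{i,t+1}$, and $\beta^0_{i,t+1}=\beta_{i,t+1}$, $\beta^{k+1}_{i,t+1}=\sum_{j=1}^mW(i,j)\beta^k_{j,t+1}$ for $k=0,\ldots,T-1$. Let $\bar{\mu}_{i,t}=\frac{4}{t\sigma_x^2}\sum_{j=1}^t\mu_{i,j}\mu_{i,j}^*$. The event $E_3$ is the intersection over all $i$ of $\{\|\sum_{j=1}^tx_{i,j}x_{i,j}^*\|\le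 t(\frac{19}{8}\sigma_x^2+\hat\mu^2)\}$, $\{\lambda_{\min}(\sum_{j=1}^tx_{i,j}x_{i,j}^* )\ge\frac{t\sigma_x^2}{8}\lambda_{\min}(I_n+\bar\mu_{i,t})\}$, and $\{\|\sum_{j=1}^t\eta_{i,j}x_{i,j}^*\|\le\sqrt t\,\sigma_\eta(4\sigma_x\sqrt{(n+l)\log\frac9{\hat\delta}}+\hat\mu(\sqrt{2(l+n)}+\sqrt{2\log\frac2{\hat\delta}}))\}$. $\|\cdot\|$ is the spectral norm, $A^*$ the transpose. *)

theory Defs
  imports "HOL-Analysis.Analysis" "HOL-Computational_Algebra.Polynomial" "HOL-Library.Multiset"
begin

definition outer :: "real^'a \<Rightarrow> real^'b \<Rightarrow> real^'b^'a" where
  "outer u v = (\<chi> a b. u $ a * v $ b)"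

definition spec_norm :: "real^'n^'m \<Rightarrow> real" where
  "spec_norm A = onorm (\<lambda>v. A *v v)"

definition char_poly :: "real^'n^'n \<Rightarrow> real poly" where
  "char_poly A = det ((\<chi> i j. (if i = j then [:0, 1:] else 0) - [:A $ i $ j:]) :: real poly^'n^'n)"

definition eigvals :: "real^'n^'n \<Rightarrow> real multiset" where
  "eigvals A = proots (char_poly A)"

text \<open>Eigenvalues in non-increasing order: lambda_1 >= lambda_2 >= ... (list index k-1).\<close>
definition eig_desc :: "real^'n^'n \<Rightarrow> real list" where
  "eig_desc A = rev (sorted_list_of_multiset (eigvals A))"

definition lambda_min :: "real^'n^'n \<Rightarrow> real" where
  "lambda_min A = Min (set_mset (eigvals A))"

definition rho :: "real^'m^'m \<Rightarrow> real" where
  "rho W = max (eig_desc W ! 1) (- lambda_min W)"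

fun cons_iter :: "real^'m^'m \<Rightarrow> ('m \<Rightarrow> real^'n^'n) \<Rightarrow> nat \<Rightarrow> 'm \<Rightarrow> real^'n^'n" where
  "cons_iter W B 0 i = B i"
| "cons_iter W B (Suc k) i = (\<Sum>j\<in>UNIV. W $ i $ j *\<^sub>R cons_iter W B k j)"

end

theory Submission
  imports Defs
begin

lemma sym_inner:
  fixes A :: "real^'n^'n"
  assumes "transpose A = A"
  shows "x \<bullet> (A *v y) = (A *v x) \<bullet> y"
  by (metis assms dot_lmul_matrix vector_transpose_matrix)

lemma quad_nonpos_zero:
  fixes a c :: real
  assumes "\<And>s. 2 * s * a + s^2 * c \<le> 0"
  shows "a = 0"
proof -
  define s where "s = a / (\<bar>c\<bar> + 1)"
  have p: "\<bar>c\<bar> + 1 > 0" by simp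
  have "2 * s * a + s^2 * c \<le> 0" by (rule assms)
  moreover have "2 * s * a + s^2 * c = a^2 * (2 * (\<bar>c\<bar> + 1) + c) / (\<bar>c\<bar> + 1)^2"
  proof -
    have gen: "\<And>k::real. k > 0 \<Longrightarrow> 2 * (a/k) * a + (a/k)^2 * c = a^2 * (2 * k + c) / k^2"
      by (simp add: field_simps power2_eq_square)
    show ?thesis unfolding s_def by (rule gen[OF p])
  qed
  ultimately have "a^2 * (2 * (\<bar>c\<bar> + 1) + c) / (\<bar>c\<bar> + 1)^2 \<le> 0" by simp
  then have "a^2 * (2 * \<bar>c\<bar> + 2 + c) \<le> 0"
    using p by (simp add: divide_le_0_iff algebra_simps)
  moreover have "2 * \<bar>c\<bar> + 2 + c > 0" by (cases "c \<ge> 0") auto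
  ultimately have "a^2 \<le> 0" by (simp add: mult_le_0_iff)
  then show ?thesis by simp
qed

lemma sym_eigvec:
  fixes A :: "real^'n^'n"
  assumes sym: "transpose A = A" and S: "subspace S" and inv: "\<And>v. v \<in> S \<Longrightarrow> A *v v \<in> S"
    and nz: "S \<noteq> {0}"
  shows "\<exists>u\<in>S. norm u = 1 \<and> (\<exists>l. A *v u = l *\<^sub>R u)"
proof -
  define K where "K = S \<inter> sphere 0 1"
  have "compact K" unfolding K_def
    by (intro closed_Int_compact closed_subspace S compact_sphere)
  obtain v where v: "v \<in> S" "v \<noteq> 0" using nz S subspace_0 by blast
  have "v /\<^sub>R norm v \<in> K" unfolding K_def using v S by (auto simp: subspace_scale)
  then have "K \<noteq> {}" by auto
  have "continuous_on K (\<lambda>v. v \<bullet> (A *v v))"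
    by (intro continuous_intros linear_continuous_on matrix_vector_mul_bounded_linear)
  then obtain u where u: "u \<in> K" and umax: "\<And>w. w \<in> K \<Longrightarrow> w \<bullet> (A *v w) \<le> u \<bullet> (A *v u)"
    using continuous_attains_sup[OF \<open>compact K\<close> \<open>K \<noteq> {}\<close>] by blast
  define l where "l = u \<bullet> (A *v u)"
  have uS: "u \<in> S" and un: "norm u = 1" using u unfolding K_def by auto
  have uu: "u \<bullet> u = 1" using un by (simp add: norm_eq_1)
  have bound: "w \<bullet> (A *v w) \<le> l * (w \<bullet> w)" if "w \<in> S" for w
  proof (cases "w = 0")
    case True then show ?thesis by simp
  next
    case False
    have "w /\<^sub>R norm w \<in> K" unfolding K_def using that S False by (auto simp: subspace_scale)
    then have "(w /\<^sub>R norm w) \<bullet> (A *v (w /\<^sub>R norm w)) \<le> l" using umax l_def by blast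
    then have "(w \<bullet> (A *v w)) / (norm w)^2 \<le> l"
      by (simp add: matrix_vector_mult_scaleR power2_eq_square field_simps)
    then have "w \<bullet> (A *v w) \<le> l * (norm w)^2" using False by (simp add: divide_le_eq mult.commute)
    then show ?thesis by (simp add: power2_norm_eq_inner)
  qed
  define r where "r = A *v u - l *\<^sub>R u"
  have rS: "r \<in> S" unfolding r_def using inv uS S by (simp add: subspace_diff subspace_scale)
  have ru: "r \<bullet> u = 0" unfolding r_def l_def using uu sym_inner[OF sym, of u u]
    by (simp add: inner_diff_left inner_diff_right inner_commute)
  have rAu: "r \<bullet> (A *v u) = r \<bullet> r"
  proof -
    have "A *v u = r + l *\<^sub>R u" unfolding r_def by simp
    then show ?thesis using ru by (simp add: inner_add_right)
  qed
  have uAr: "u \<bullet> (A *v r) = r \<bullet> r" using sym_inner[OF sym, of u r] rAu by (simp add: inner_commute)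
  have "2 * s * (r \<bullet> r) + s^2 * (r \<bullet> (A *v r) - l * (r \<bullet> r)) \<le> 0" for s
  proof -
    have "u + s *\<^sub>R r \<in> S" using uS rS S by (simp add: subspace_add subspace_scale)
    from bound[OF this]
    have h1: "(u + s *\<^sub>R r) \<bullet> (A *v (u + s *\<^sub>R r)) \<le> l * ((u + s *\<^sub>R r) \<bullet> (u + s *\<^sub>R r))" .
    have h2: "(u + s *\<^sub>R r) \<bullet> (A *v (u + s *\<^sub>R r)) = l + 2 * s * (r \<bullet> r) + s^2 * (r \<bullet> (A *v r))"
      using rAu uAr unfolding l_def
      by (simp add: matrix_vector_right_distrib matrix_vector_mult_scaleR inner_add_left inner_add_right
          power2_eq_square algebra_simps)
    have h3: "(u + s *\<^sub>R r) \<bullet> (u + s *\<^sub>R r) = 1 + s^2 * (r \<bullet> r)"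
      using uu ru by (simp add: inner_add_left inner_add_right inner_commute power2_eq_square algebra_simps)
    have "l + 2 * s * (r \<bullet> r) + s^2 * (r \<bullet> (A *v r)) \<le> l * (1 + s^2 * (r \<bullet> r))"
      using h1 unfolding h2 h3 .
    then show ?thesis by (simp add: algebra_simps)
  qed
  then have "r \<bullet> r = 0" by (rule quad_nonpos_zero)
  then have "r = 0" by simp
  then have "A *v u = l *\<^sub>R u" unfolding r_def by simp
  then show ?thesis using uS un by blast
qed

lemma sym_basis_subspace:
  fixes A :: "real^'n^'n"
  assumes sym: "transpose A = A"
  shows "subspace S \<Longrightarrow> (\<And>v. v \<in> S \<Longrightarrow> A *v v \<in> S) \<Longrightarrow>
    \<exists>B. B \<subseteq> S \<and> pairwise orthogonal B \<and> (\<forall>x\<in>B. norm x = 1 \<and> (\<exists>l. A *v x = l *\<^sub>R x)) \<and> span B = S"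
proof (induction "dim S" arbitrary: S rule: less_induct)
  case less
  show ?case
  proof (cases "S = {0}")
    case True
    then show ?thesis by (intro exI[of _ "{}"]) auto
  next
    case False
    obtain u l where uS: "u \<in> S" and un: "norm u = 1" and ul: "A *v u = l *\<^sub>R u"
      using sym_eigvec[OF sym less.prems False] by blast
    have uu: "u \<bullet> u = 1" using un by (simp add: norm_eq_1)
    define S' where "S' = S \<inter> {v. u \<bullet> v = 0}"
    have sub': "subspace S'" unfolding S'_def using less.prems(1) subspace_hyperplane[of u]
      by (rule subspace_inter)
    have inv': "A *v v \<in> S'" if "v \<in> S'" for v
    proof -
      have "A *v v \<in> S" using that less.prems(2) unfolding S'_def by auto
      moreover have "u \<bullet> (A *v v) = 0" using sym_inner[OF sym, of u v] ul that unfolding S'_def by auto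
      ultimately show ?thesis unfolding S'_def by auto
    qed
    have "S' \<subset> S" using uS uu unfolding S'_def by (metis (mono_tags, lifting) Int_iff mem_Collect_eq psubsetI inf_le1 zero_neq_one)
    then have "span S' \<subset> span S" using sub' less.prems(1) span_eq_iff by metis
    then have "dim S' < dim S" by (rule dim_psubset)
    from less.hyps[OF this sub' inv'] obtain B' where B': "B' \<subseteq> S'" "pairwise orthogonal B'"
      "\<forall>x\<in>B'. norm x = 1 \<and> (\<exists>l. A *v x = l *\<^sub>R x)" "span B' = S'" by blast
    have uB': "u \<notin> B'" using B'(1) uu unfolding S'_def by auto
    show ?thesis
    proof (intro exI[of _ "insert u B'"] conjI)
      show "insert u B' \<subseteq> S" using B'(1) uS unfolding S'_def by auto
      show "pairwise orthogonal (insert u B')"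
        using B'(1,2) unfolding pairwise_insert S'_def orthogonal_def
        by (auto simp: inner_commute)
      show "\<forall>x\<in>insert u B'. norm x = 1 \<and> (\<exists>l. A *v x = l *\<^sub>R x)" using B'(3) un ul by auto
      show "span (insert u B') = S"
      proof
        show "span (insert u B') \<subseteq> S"
          using \<open>insert u B' \<subseteq> S\<close> less.prems(1) by (rule span_minimal)
        show "S \<subseteq> span (insert u B')"
        proof
          fix v assume v: "v \<in> S"
          have "v - (u \<bullet> v) *\<^sub>R u \<in> S'" unfolding S'_def using v uS uu less.prems(1)
            by (auto simp: subspace_diff subspace_scale inner_diff_right)
          then have "v - (u \<bullet> v) *\<^sub>R u \<in> span (insert u B')"
            using B'(4) span_mono[of B' "insert u B'"] by auto
          moreover have "(u \<bullet> v) *\<^sub>R u \<in> span (insert u B')"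
            by (intro span_mul span_base) simp
          ultimately have "(v - (u \<bullet> v) *\<^sub>R u) + (u \<bullet> v) *\<^sub>R u \<in> span (insert u B')"
            by (rule span_add)
          then show "v \<in> span (insert u B')" by simp
        qed
      qed
    qed
  qed
qed

lemma sym_spectral:
  fixes A :: "real^'n^'n"
  assumes sym: "transpose A = A"
  obtains b :: "'n \<Rightarrow> real^'n" and d :: "'n \<Rightarrow> real"
  where "\<And>s. A *v b s = d s *\<^sub>R b s" "\<And>s t. b s \<bullet> b t = (if s = t then 1 else 0)"
proof -
  obtain B where B: "pairwise orthogonal B" "\<forall>x\<in>B. norm x = 1 \<and> (\<exists>l. A *v x = l *\<^sub>R x)"
    "span B = UNIV"
    using sym_basis_subspace[OF sym, of UNIV] by auto
  have "0 \<notin> B" using B(2) by force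
  then have ind: "independent B" using B(1) by (rule pairwise_orthogonal_independent[rotated])
  then have fin: "finite B" using independent_bound by blast
  have "card B = dim (span B)" using ind dim_span_eq_card_independent by metis
  also have "\<dots> = CARD('n)" using B(3) by simp
  finally have "card (UNIV :: 'n set) = card B" by simp
  then obtain h where h: "bij_betw h (UNIV :: 'n set) B" using finite_same_card_bij[OF finite fin] by auto
  have "\<exists>l. A *v h s = l *\<^sub>R h s" for s using h B(2) bij_betwE by blast
  then obtain d where d: "\<And>s. A *v h s = d s *\<^sub>R h s" by metis
  show ?thesis
  proof (rule that[of h d])
    show "A *v h s = d s *\<^sub>R h s" for s by (rule d)
    show "h s \<bullet> h t = (if s = t then 1 else 0)" for s t
    proof (cases "s = t")
      case True
      have "norm (h s) = 1" using h B(2) bij_betwE by blast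
      then show ?thesis using True by (simp add: norm_eq_1)
    next
      case False
      then have "h s \<noteq> h t" using h by (metis bij_betw_def inj_def)
      moreover have "h s \<in> B" "h t \<in> B" using h bij_betwE by blast+
      ultimately show ?thesis using B(1) False unfolding pairwise_def orthogonal_def by auto
    qed
  qed
qed

lemma ob_complete:
  fixes b :: "'n::finite \<Rightarrow> real^'n"
  assumes ob: "\<And>s t. b s \<bullet> b t = (if s = t then 1 else 0)"
  shows "(\<Sum>s\<in>UNIV. b s $ i * b s $ j) = (if i = j then 1 else 0)"
proof -
  define Q :: "real^'n^'n" where "Q = (\<chi> i s. b s $ i)"
  have "transpose Q ** Q = mat 1"
    unfolding Q_def by (simp add: matrix_matrix_mult_def transpose_def mat_def vec_eq_iff
        ob[unfolded inner_vec_def, simplified])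
  then have "Q ** transpose Q = mat 1" using matrix_left_right_inverse by blast
  then have "(Q ** transpose Q) $ i $ j = (mat 1 :: real^'n^'n) $ i $ j" by simp
  then show ?thesis unfolding Q_def by (simp add: matrix_matrix_mult_def transpose_def mat_def)
qed

lemma ob_expand:
  fixes b :: "'n::finite \<Rightarrow> real^'n"
  assumes ob: "\<And>s t. b s \<bullet> b t = (if s = t then 1 else 0)"
  shows "v = (\<Sum>s\<in>UNIV. (b s \<bullet> v) *\<^sub>R b s)"
proof (subst vec_eq_iff, intro allI)
  fix i
  have "(\<Sum>s\<in>UNIV. (b s \<bullet> v) *\<^sub>R b s) $ i = (\<Sum>s\<in>UNIV. \<Sum>j\<in>UNIV. v $ j * (b s $ j * b s $ i))"
    by (simp add: inner_vec_def sum_distrib_left sum_distrib_right mult_ac)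
  also have "\<dots> = (\<Sum>j\<in>UNIV. v $ j * (\<Sum>s\<in>UNIV. b s $ j * b s $ i))"
    by (subst sum.swap) (simp add: sum_distrib_left)
  also have "\<dots> = (\<Sum>j\<in>UNIV. v $ j * (if j = i then 1 else 0))"
    by (simp add: ob_complete[OF ob])
  also have "\<dots> = v $ i" by (simp add: if_distrib cong: if_cong)
  finally show "v $ i = (\<Sum>s\<in>UNIV. (b s \<bullet> v) *\<^sub>R b s) $ i" by simp
qed

lemma ob_parseval:
  fixes b :: "'n::finite \<Rightarrow> real^'n"
  assumes ob: "\<And>s t. b s \<bullet> b t = (if s = t then 1 else 0)"
  shows "(\<Sum>s\<in>UNIV. (b s \<bullet> v)^2) = v \<bullet> v"
proof -
  have "v \<bullet> v = v \<bullet> (\<Sum>s\<in>UNIV. (b s \<bullet> v) *\<^sub>R b s)" using ob_expand[OF ob, of v] by simp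
  also have "\<dots> = (\<Sum>s\<in>UNIV. (b s \<bullet> v)^2)"
    by (simp add: inner_sum_right power2_eq_square inner_commute)
  finally show ?thesis by simp
qed

lemma ob_apply:
  fixes b :: "'n::finite \<Rightarrow> real^'n" and A :: "real^'n^'n"
  assumes ob: "\<And>s t. b s \<bullet> b t = (if s = t then 1 else 0)"
    and ev: "\<And>s. A *v b s = d s *\<^sub>R b s"
  shows "A *v v = (\<Sum>s\<in>UNIV. (d s * (b s \<bullet> v)) *\<^sub>R b s)"
proof -
  have "A *v v = A *v (\<Sum>s\<in>UNIV. (b s \<bullet> v) *\<^sub>R b s)" using ob_expand[OF ob, of v] by simp
  also have "\<dots> = (\<Sum>s\<in>UNIV. (b s \<bullet> v) *\<^sub>R (A *v b s))"
    using linear_sum[OF matrix_vector_mul_linear, of A] 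
    by (simp add: linear_sum[OF matrix_vector_mul_linear] matrix_vector_mult_scaleR)
  also have "\<dots> = (\<Sum>s\<in>UNIV. (d s * (b s \<bullet> v)) *\<^sub>R b s)" by (simp add: ev mult.commute)
  finally show ?thesis .
qed

lemma ob_quad:
  fixes b :: "'n::finite \<Rightarrow> real^'n" and A :: "real^'n^'n"
  assumes ob: "\<And>s t. b s \<bullet> b t = (if s = t then 1 else 0)"
    and ev: "\<And>s. A *v b s = d s *\<^sub>R b s"
  shows "v \<bullet> (A *v v) = (\<Sum>s\<in>UNIV. d s * (b s \<bullet> v)^2)"
  unfolding ob_apply[OF ob ev]
  by (simp add: inner_sum_right power2_eq_square inner_commute mult_ac)

lemma poly_det:
  fixes M :: "'a::comm_ring_1 poly^'n^'n"
  shows "poly (det M) x = det (\<chi> i j. poly (M $ i $ j) x)"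
  unfolding det_def by (simp add: poly_sum poly_prod)

lemma ob_entry:
  fixes b :: "'n::finite \<Rightarrow> real^'n" and A :: "real^'n^'n"
  assumes ob: "\<And>s t. b s \<bullet> b t = (if s = t then 1 else 0)"
    and ev: "\<And>s. A *v b s = d s *\<^sub>R b s"
  shows "A $ i $ j = (\<Sum>s\<in>UNIV. d s * b s $ i * b s $ j)"
proof -
  have "A $ i $ j = (A *v axis j 1) $ i"
    by (simp add: matrix_vector_mult_def axis_def if_distrib cong: if_cong)
  also have "\<dots> = (\<Sum>s\<in>UNIV. d s * b s $ i * b s $ j)"
    unfolding ob_apply[OF ob ev] by (simp add: inner_axis mult_ac)
  finally show ?thesis .
qed

lemma ob_charpoly_eval:
  fixes b :: "'n::finite \<Rightarrow> real^'n" and A :: "real^'n^'n"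
  assumes ob: "\<And>s t. b s \<bullet> b t = (if s = t then 1 else 0)"
    and ev: "\<And>s. A *v b s = d s *\<^sub>R b s"
  shows "poly (char_poly A) x = (\<Prod>s\<in>UNIV. x - d s)"
proof -
  define Q :: "real^'n^'n" where "Q = (\<chi> i s. b s $ i)"
  define D :: "real^'n^'n" where "D = (\<chi> s t. if s = t then x - d s else 0)"
  have QQ: "Q ** transpose Q = mat 1"
    unfolding Q_def by (simp add: matrix_matrix_mult_def transpose_def mat_def vec_eq_iff ob_complete[OF ob])
  have "poly (char_poly A) x = det (\<chi> i j. (if i = j then x else 0) - A $ i $ j)"
    unfolding char_poly_def poly_det by (auto simp: vec_eq_iff intro!: arg_cong[where f=det])
  also have "(\<chi> i j. (if i = j then x else 0) - A $ i $ j) = Q ** D ** transpose Q"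
  proof -
    have "(Q ** D ** transpose Q) $ i $ j = (if i = j then x else 0) - A $ i $ j" for i j
    proof -
      have "(Q ** D ** transpose Q) $ i $ j = (\<Sum>s\<in>UNIV. b s $ i * (x - d s) * b s $ j)"
        unfolding Q_def D_def by (simp add: matrix_matrix_mult_def transpose_def if_distrib if_distribR cong: if_cong)
      also have "\<dots> = x * (\<Sum>s\<in>UNIV. b s $ i * b s $ j) - (\<Sum>s\<in>UNIV. d s * b s $ i * b s $ j)"
        by (simp add: sum_distrib_left sum_subtractf[symmetric] algebra_simps)
      also have "\<dots> = (if i = j then x else 0) - A $ i $ j"
        by (simp add: ob_complete[OF ob] ob_entry[OF ob ev])
      finally show ?thesis .
    qed
    then show ?thesis by (simp add: vec_eq_iff)
  qed
  also have "det (Q ** D ** transpose Q) = det D * (det Q * det (transpose Q))"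
    by (simp add: det_mul)
  also have "det Q * det (transpose Q) = 1"
    using QQ by (metis det_I det_mul)
  also have "det D = (\<Prod>s\<in>UNIV. x - d s)"
    unfolding D_def by (subst det_diagonal) auto
  finally show ?thesis by simp
qed

lemma ob_charpoly:
  fixes b :: "'n::finite \<Rightarrow> real^'n" and A :: "real^'n^'n"
  assumes ob: "\<And>s t. b s \<bullet> b t = (if s = t then 1 else 0)"
    and ev: "\<And>s. A *v b s = d s *\<^sub>R b s"
  shows "char_poly A = (\<Prod>s\<in>UNIV. [:- d s, 1:])"
proof -
  have "poly (char_poly A) = poly (\<Prod>s\<in>UNIV. [:- d s, 1:])"
    by (rule ext) (simp add: ob_charpoly_eval[OF ob ev] poly_prod)
  then show ?thesis by (simp add: poly_eq_poly_eq_iff)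
qed

lemma ob_eigvals:
  fixes b :: "'n::finite \<Rightarrow> real^'n" and A :: "real^'n^'n"
  assumes ob: "\<And>s t. b s \<bullet> b t = (if s = t then 1 else 0)"
    and ev: "\<And>s. A *v b s = d s *\<^sub>R b s"
  shows "eigvals A = (\<Sum>s\<in>UNIV. {# d s #})"
  unfolding eigvals_def ob_charpoly[OF ob ev]
  by (subst proots_prod) auto

lemma ob_lambda_min:
  fixes b :: "'n::finite \<Rightarrow> real^'n" and A :: "real^'n^'n"
  assumes ob: "\<And>s t. b s \<bullet> b t = (if s = t then 1 else 0)"
    and ev: "\<And>s. A *v b s = d s *\<^sub>R b s"
  shows "lambda_min A = Min (range d)"
proof -
  have "set_mset (\<Sum>s\<in>UNIV. {# d s #}) = range d"
    by (auto simp: set_mset_sum)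
  then show ?thesis unfolding lambda_min_def ob_eigvals[OF ob ev] by simp
qed

lemma ob_quad_lower:
  fixes b :: "'n::finite \<Rightarrow> real^'n" and A :: "real^'n^'n"
  assumes ob: "\<And>s t. b s \<bullet> b t = (if s = t then 1 else 0)"
    and ev: "\<And>s. A *v b s = d s *\<^sub>R b s"
  shows "v \<bullet> (A *v v) \<ge> lambda_min A * (v \<bullet> v)"
proof -
  have "lambda_min A * (v \<bullet> v) = (\<Sum>s\<in>UNIV. lambda_min A * (b s \<bullet> v)^2)"
    by (simp add: ob_parseval[OF ob] sum_distrib_left[symmetric])
  also have "\<dots> \<le> (\<Sum>s\<in>UNIV. d s * (b s \<bullet> v)^2)"
    by (intro sum_mono mult_right_mono) (auto simp: ob_lambda_min[OF ob ev])
  finally show ?thesis by (simp add: ob_quad[OF ob ev])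
qed

lemma sym_quad_lower:
  fixes A :: "real^'n^'n"
  assumes "transpose A = A"
  shows "v \<bullet> (A *v v) \<ge> lambda_min A * (v \<bullet> v)"
proof -
  obtain b :: "'n \<Rightarrow> real^'n" and d :: "'n \<Rightarrow> real" where ev: "\<And>s. A *v b s = d s *\<^sub>R b s" and ob: "\<And>s t. b s \<bullet> b t = (if s = t then 1 else 0)"
    using sym_spectral[OF assms(1)] by blast
  show ?thesis by (rule ob_quad_lower[OF ob ev])
qed

lemma sym_lambda_min_ge:
  fixes A :: "real^'n^'n"
  assumes "transpose A = A" and "\<And>v. v \<bullet> (A *v v) \<ge> c * (v \<bullet> v)"
  shows "lambda_min A \<ge> c"
proof -
  obtain b :: "'n \<Rightarrow> real^'n" and d :: "'n \<Rightarrow> real" where ev: "\<And>s. A *v b s = d s *\<^sub>R b s" and ob: "\<And>s t. b s \<bullet> b t = (if s = t then 1 else 0)"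
    using sym_spectral[OF assms(1)] by blast
  have "d s \<ge> c" for s
  proof -
    have "b s \<bullet> (A *v b s) = d s" using ev ob[of s s] by simp
    then show ?thesis using assms(2)[of "b s"] ob[of s s] by simp
  qed
  then show ?thesis unfolding ob_lambda_min[OF ob ev] by simp
qed

fun Pw :: "real^'m^'m \<Rightarrow> nat \<Rightarrow> 'm \<Rightarrow> 'm \<Rightarrow> real" where
  "Pw W 0 i j = (if i = j then 1 else 0)"
| "Pw W (Suc k) i j = (\<Sum>l\<in>UNIV. W $ i $ l * Pw W k l j)"

lemma sorted_second_unique:
  fixes d :: "'m::finite \<Rightarrow> real"
  assumes M: "M = (\<Sum>s\<in>UNIV. {# d s #})" and m2: "CARD('m) \<ge> 2"
    and s1: "d s1 > rev (sorted_list_of_multiset M) ! 1"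
    and s2: "d s2 > rev (sorted_list_of_multiset M) ! 1"
  shows "s1 = s2"
proof (rule ccontr)
  assume ne: "s1 \<noteq> s2"
  define xs where "xs = sorted_list_of_multiset M"
  define m where "m = CARD('m)"
  have sizeM: "size M = m" unfolding M m_def by simp
  have len: "length xs = m" unfolding xs_def using sizeM by (metis size_mset mset_sorted_list_of_multiset)
  have srt: "sorted xs" unfolding xs_def by simp
  define b2 where "b2 = xs ! (m - 2)"
  have rb: "rev xs ! 1 = b2" unfolding b2_def using len m2 m_def by (simp add: rev_nth numeral_2_eq_2)
  have P1: "d s1 > b2" "d s2 > b2" using s1 s2 rb unfolding xs_def by auto
  have sub: "{# d s1, d s2 #} \<subseteq># M"
  proof -
    have e1: "M = {# d s1 #} + (\<Sum>s\<in>UNIV - {s1}. {# d s #})"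
      unfolding M by (rule sum.remove) auto
    have e2: "(\<Sum>s\<in>UNIV - {s1}. {# d s #}) = {# d s2 #} + (\<Sum>s\<in>UNIV - {s1} - {s2}. {# d s #})"
      using ne by (intro sum.remove) auto
    have "M = {# d s1, d s2 #} + (\<Sum>s\<in>UNIV - {s1} - {s2}. {# d s #})"
      using e1 e2 by simp
    then show ?thesis by (metis mset_subset_eq_add_left)
  qed
  have "2 = size (filter_mset (\<lambda>x. x > b2) {# d s1, d s2 #})" using P1 by simp
  also have "\<dots> \<le> size (filter_mset (\<lambda>x. x > b2) M)"
    by (intro size_mset_mono multiset_filter_mono sub)
  also have "filter_mset (\<lambda>x. x > b2) M = mset (filter (\<lambda>x. x > b2) xs)"
    unfolding xs_def by (simp add: mset_filter)
  also have "size \<dots> = card {i. i < length xs \<and> xs ! i > b2}"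
    by (simp only: size_mset length_filter_conv_card)
  also have "\<dots> \<le> card {m - 1}"
  proof (rule card_mono)
    show "{i. i < length xs \<and> xs ! i > b2} \<subseteq> {m - 1}"
    proof
      fix i assume i: "i \<in> {i. i < length xs \<and> xs ! i > b2}"
      have "\<not> i \<le> m - 2"
      proof
        assume "i \<le> m - 2"
        then have "xs ! i \<le> xs ! (m - 2)" using srt len m2 m_def by (intro sorted_nth_mono) auto
        then show False using i b2_def by auto
      qed
      then show "i \<in> {m - 1}" using i len by auto
    qed
  qed simp
  finally show False by simp
qed

lemma amgm2: "\<bar>x * y\<bar> \<le> ((x::real)^2 + y^2) / 2"
proof -
  have "0 \<le> (\<bar>x\<bar> - \<bar>y\<bar>)^2" by simp
  then show ?thesis by (simp add: power2_eq_square abs_mult algebra_simps)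
qed

lemma Pw_eig:
  fixes W :: "real^'m^'m" and b :: "'m \<Rightarrow> real^'m"
  assumes ob: "\<And>s t. b s \<bullet> b t = (if s = t then 1 else 0)"
    and ev: "\<And>s. W *v b s = d s *\<^sub>R b s"
  shows "Pw W k i j = (\<Sum>s\<in>UNIV. b s $ i * d s ^ k * b s $ j)"
proof (induction k arbitrary: i)
  case 0
  then show ?case using ob_complete[OF ob, of i j] by simp
next
  case (Suc k)
  have "Pw W (Suc k) i j = (\<Sum>l\<in>UNIV. W $ i $ l * (\<Sum>s\<in>UNIV. b s $ l * d s ^ k * b s $ j))"
    using Suc by simp
  also have "\<dots> = (\<Sum>s\<in>UNIV. (\<Sum>l\<in>UNIV. W $ i $ l * b s $ l) * d s ^ k * b s $ j)"
  proof -
    have "(\<Sum>l\<in>UNIV. W $ i $ l * (\<Sum>s\<in>UNIV. b s $ l * d s ^ k * b s $ j))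
        = (\<Sum>l\<in>UNIV. \<Sum>s\<in>UNIV. W $ i $ l * (b s $ l * d s ^ k * b s $ j))"
      by (simp add: sum_distrib_left)
    also have "\<dots> = (\<Sum>s\<in>UNIV. \<Sum>l\<in>UNIV. W $ i $ l * (b s $ l * d s ^ k * b s $ j))"
      by (rule sum.swap)
    also have "\<dots> = (\<Sum>s\<in>UNIV. (\<Sum>l\<in>UNIV. W $ i $ l * b s $ l) * d s ^ k * b s $ j)"
      by (simp add: sum_distrib_left sum_distrib_right mult_ac)
    finally show ?thesis .
  qed
  also have "\<dots> = (\<Sum>s\<in>UNIV. b s $ i * d s ^ Suc k * b s $ j)"
  proof -
    have "(\<Sum>l\<in>UNIV. W $ i $ l * b s $ l) = d s * b s $ i" for s
      using arg_cong[OF ev[of s], of "\<lambda>v. v $ i"] by (simp add: matrix_vector_mult_def)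
    then show ?thesis by (simp add: mult_ac)
  qed
  finally show ?case .
qed

lemma W_spectral_bound:
  fixes W :: "real^'m^'m"
  assumes sym: "transpose W = W" and stoch: "W *v (\<chi> k. 1) = (\<chi> k. 1)"
    and m2: "CARD('m) \<ge> 2" and rho1: "rho W < 1"
  shows "rho W \<ge> 0 \<and> (\<forall>k i j. \<bar>Pw W k i j - 1 / real CARD('m)\<bar> \<le> rho W ^ k)"
proof -
  obtain b :: "'m \<Rightarrow> real^'m" and d :: "'m \<Rightarrow> real"
    where ev: "\<And>s. W *v b s = d s *\<^sub>R b s" and ob: "\<And>s t. b s \<bullet> b t = (if s = t then 1 else 0)"
    using sym_spectral[OF sym] by blast
  define M where "M = (\<Sum>s\<in>UNIV. {# d s #})"
  have eig: "eigvals W = M" unfolding M_def by (rule ob_eigvals[OF ob ev])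
  define b2 where "b2 = rev (sorted_list_of_multiset M) ! 1"
  have rho_def': "rho W = max b2 (- Min (range d))"
    unfolding rho_def eig_desc_def eig b2_def ob_lambda_min[OF ob ev] ..
  have uniq: "s1 = s2" if "d s1 > b2" "d s2 > b2" for s1 s2
    using sorted_second_unique[OF M_def m2] that unfolding b2_def by blast
  have dlow: "d s \<ge> - rho W" for s
  proof -
    have "Min (range d) \<le> d s" by simp
    then show ?thesis unfolding rho_def' by linarith
  qed
  define e :: "real^'m" where "e = (\<chi> k. 1)"
  have be: "b t \<bullet> e = d t * (b t \<bullet> e)" for t
  proof -
    have "b t \<bullet> e = b t \<bullet> (W *v e)" using stoch e_def by simp
    also have "\<dots> = (W *v b t) \<bullet> e" by (rule sym_inner[OF sym])
    finally show ?thesis by (simp add: ev)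
  qed
  have ee: "e \<bullet> e = real CARD('m)" unfolding e_def by (simp add: inner_vec_def)
  have pars: "(\<Sum>s\<in>UNIV. (b s \<bullet> e)^2) = real CARD('m)" using ob_parseval[OF ob, of e] ee by simp
  obtain t0 where t0: "b t0 \<bullet> e \<noteq> 0"
  proof (rule ccontr)
    assume "\<not> thesis"
    then have "\<forall>t. b t \<bullet> e = 0" using that by blast
    then show False using pars m2 by simp
  qed
  have dt0: "d t0 = 1" using be[of t0] t0 by simp
  have t0big: "d t0 > b2" using dt0 rho1 unfolding rho_def' by linarith
  have others: "b s \<bullet> e = 0 \<and> \<bar>d s\<bar> \<le> rho W" if "s \<noteq> t0" for s
  proof
    show "b s \<bullet> e = 0"
    proof (rule ccontr)
      assume "b s \<bullet> e \<noteq> 0"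
      then have "d s = 1" using be[of s] by simp
      then have "d s > b2" using rho1 unfolding rho_def' by linarith
      then show False using uniq t0big that by blast
    qed
    have "\<not> d s > b2" using uniq t0big that by blast
    then show "\<bar>d s\<bar> \<le> rho W" using dlow[of s] unfolding rho_def' by linarith
  qed
  obtain s1 :: 'm where "s1 \<noteq> t0"
  proof -
    have "card (UNIV :: 'm set) \<ge> 2" using m2 by simp
    then have "\<exists>s. s \<noteq> t0"
    proof (rule contrapos_pp)
      assume "\<not> (\<exists>s. s \<noteq> t0)"
      then have "UNIV = {t0}" by auto
      then have "card (UNIV :: 'm set) = card {t0}" by (rule arg_cong)
      then show "\<not> card (UNIV :: 'm set) \<ge> 2" by simp
    qed
    then show ?thesis using that by blast
  qed
  have rho0: "rho W \<ge> 0" using others[OF \<open>s1 \<noteq> t0\<close>] by linarith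
  define c where "c = b t0 \<bullet> e"
  have sumrm: "(\<Sum>s\<in>UNIV. f s) = f t0 + (\<Sum>s\<in>UNIV - {t0}. f s)" for f :: "'m \<Rightarrow> 'z::comm_monoid_add"
    by (rule sum.remove) auto
  have c2: "c^2 = real CARD('m)"
  proof -
    have "(\<Sum>s\<in>UNIV - {t0}. (b s \<bullet> e)^2) = 0" using others by (intro sum.neutral) auto
    then show ?thesis using pars sumrm[of "\<lambda>s. (b s \<bullet> e)^2"] c_def by simp
  qed
  have comp: "c * b t0 $ i = 1" for i
  proof -
    have "(\<Sum>s\<in>UNIV - {t0}. (b s \<bullet> e) *\<^sub>R b s) = 0" using others by (intro sum.neutral) auto
    then have "e = c *\<^sub>R b t0" using ob_expand[OF ob, of e] sumrm[of "\<lambda>s. (b s \<bullet> e) *\<^sub>R b s"] c_def by simp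
    then have "e $ i = c * b t0 $ i" by simp
    then show ?thesis unfolding e_def by simp
  qed
  have prod0: "b t0 $ i * b t0 $ j = 1 / real CARD('m)" for i j
  proof -
    have "c \<noteq> 0" using c_def t0 by simp
    then have "b t0 $ i = 1 / c" "b t0 $ j = 1 / c" using comp[of i] comp[of j] by (simp_all add: field_simps)
    then show ?thesis using c2 by (simp add: power2_eq_square)
  qed
  have rowsq: "(\<Sum>s\<in>UNIV. (b s $ i)^2) = 1" for i
    using ob_complete[OF ob, of i i] by (simp add: power2_eq_square)
  have "\<bar>Pw W k i j - 1 / real CARD('m)\<bar> \<le> rho W ^ k" for k i j
  proof -
    have "Pw W k i j - 1 / real CARD('m) = (\<Sum>s\<in>UNIV - {t0}. b s $ i * d s ^ k * b s $ j)"
      using Pw_eig[OF ob ev, of k i j] sumrm[of "\<lambda>s. b s $ i * d s ^ k * b s $ j"] dt0 prod0[of i j]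
      by (simp add: mult_ac)
    also have "\<bar>\<dots>\<bar> \<le> (\<Sum>s\<in>UNIV - {t0}. \<bar>b s $ i * d s ^ k * b s $ j\<bar>)" by (rule sum_abs)
    also have "\<dots> \<le> (\<Sum>s\<in>UNIV - {t0}. rho W ^ k * (((b s $ i)^2 + (b s $ j)^2) / 2))"
    proof (intro sum_mono)
      fix s assume s: "s \<in> UNIV - {t0}"
      have "\<bar>d s ^ k\<bar> \<le> rho W ^ k" using others[of s] s by (simp add: power_abs power_mono)
      moreover have "\<bar>b s $ i * b s $ j\<bar> \<le> ((b s $ i)^2 + (b s $ j)^2) / 2"
        by (rule amgm2)
      ultimately have "\<bar>d s ^ k\<bar> * \<bar>b s $ i * b s $ j\<bar> \<le> rho W ^ k * (((b s $ i)^2 + (b s $ j)^2) / 2)"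
        by (intro mult_mono) auto
      then show "\<bar>b s $ i * d s ^ k * b s $ j\<bar> \<le> rho W ^ k * (((b s $ i)^2 + (b s $ j)^2) / 2)"
        by (simp add: abs_mult mult_ac)
    qed
    also have "\<dots> \<le> (\<Sum>s\<in>UNIV. rho W ^ k * (((b s $ i)^2 + (b s $ j)^2) / 2))"
      by (rule sum_mono2) (auto intro!: mult_nonneg_nonneg zero_le_power[OF rho0] add_nonneg_nonneg zero_le_power2)
    also have "\<dots> = rho W ^ k * (((\<Sum>s\<in>UNIV. (b s $ i)^2) + (\<Sum>s\<in>UNIV. (b s $ j)^2)) / 2)"
      by (simp add: sum_distrib_left[symmetric] sum.distrib[symmetric] sum_divide_distrib[symmetric])
    also have "\<dots> = rho W ^ k" using rowsq by simp
    finally show ?thesis .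
  qed
  then show ?thesis using rho0 by blast
qed

lemma mv_sum: "(\<Sum>j\<in>S. f j) *v (v::real^'n) = (\<Sum>j\<in>S. f j *v v)"
  by (induction S rule: infinite_finite_induct) (simp_all add: matrix_vector_mult_add_rdistrib)

lemma mv_scale: "(c *\<^sub>R (A::real^'n^'m)) *v v = c *\<^sub>R (A *v v)"
  by (simp add: scaleR_matrix_vector_assoc)

lemma outer_mv: "outer u u *v v = (u \<bullet> v) *\<^sub>R (u::real^'n)"
  by (simp add: vec_eq_iff outer_def matrix_vector_mult_def inner_vec_def sum_distrib_left mult_ac)

lemma outer_quad: "v \<bullet> (outer u u *v v) = (u \<bullet> (v::real^'n))^2"
  by (simp add: outer_mv power2_eq_square inner_commute)

lemma sum_outer_quad: "v \<bullet> ((\<Sum>j\<in>S. outer (x j) (x j)) *v v) = (\<Sum>j\<in>S. (x j \<bullet> (v::real^'n))^2)"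
  by (simp add: mv_sum inner_sum_right outer_quad)

lemma sum_outer_sym: "transpose (\<Sum>j\<in>S. outer (x j) (x j)) = (\<Sum>j\<in>S. outer (x j) (x j :: real^'n))"
  by (simp add: vec_eq_iff transpose_def outer_def mult.commute)

lemma cons_iter_Pw: "cons_iter W B k i = (\<Sum>j\<in>UNIV. Pw W k i j *\<^sub>R B j)"
proof (induction k arbitrary: i)
  case 0
  have "(\<Sum>j\<in>UNIV. Pw W 0 i j *\<^sub>R B j) = (\<Sum>j\<in>UNIV. if i = j then B j else 0)"
    by (intro sum.cong) auto
  then show ?case by simp
next
  case (Suc k)
  have "cons_iter W B (Suc k) i = (\<Sum>l\<in>UNIV. W $ i $ l *\<^sub>R (\<Sum>j\<in>UNIV. Pw W k l j *\<^sub>R B j))"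
    using Suc by simp
  also have "\<dots> = (\<Sum>l\<in>UNIV. \<Sum>j\<in>UNIV. (W $ i $ l * Pw W k l j) *\<^sub>R B j)"
    by (simp add: scaleR_sum_right)
  also have "\<dots> = (\<Sum>j\<in>UNIV. \<Sum>l\<in>UNIV. (W $ i $ l * Pw W k l j) *\<^sub>R B j)"
    by (rule sum.swap)
  also have "\<dots> = (\<Sum>j\<in>UNIV. Pw W (Suc k) i j *\<^sub>R B j)"
    by (simp add: scaleR_sum_left)
  finally show ?case .
qed

lemma Pw_nonneg_sum:
  fixes W :: "real^'m^'m"
  assumes nn: "\<And>i j. W $ i $ j \<ge> 0" and st: "W *v (\<chi> k. 1) = (\<chi> k. 1)"
  shows "(\<forall>i j. Pw W k i j \<ge> 0) \<and> (\<forall>i. (\<Sum>j\<in>UNIV. Pw W k i j) = 1)"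
proof (induction k)
  case 0
  then show ?case by simp
next
  case (Suc k)
  have rs: "(\<Sum>l\<in>UNIV. W $ i $ l) = 1" for i
    using arg_cong[OF st, of "\<lambda>v. v $ i"] by (simp add: matrix_vector_mult_def)
  have "Pw W (Suc k) i j \<ge> 0" for i j using Suc nn by (auto intro!: sum_nonneg)
  moreover have "(\<Sum>j\<in>UNIV. Pw W (Suc k) i j) = 1" for i
  proof -
    have "(\<Sum>j\<in>UNIV. Pw W (Suc k) i j) = (\<Sum>l\<in>UNIV. W $ i $ l * (\<Sum>j\<in>UNIV. Pw W k l j))"
      by (simp add: sum_distrib_left) (rule sum.swap)
    also have "\<dots> = 1" using Suc rs by simp
    finally show ?thesis .
  qed
  ultimately show ?case by blast
qed

lemma coercive_inv:
  fixes A :: "real^'n^'n"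
  assumes c: "c > 0" and q: "\<And>v. v \<bullet> (A *v v) \<ge> c * (v \<bullet> v)"
  shows "A ** matrix_inv A = mat 1 \<and> matrix_inv A ** A = mat 1 \<and> (\<forall>w. norm (matrix_inv A *v w) \<le> norm w / c)"
proof -
  have low: "c * norm v \<le> norm (A *v v)" for v
  proof (cases "v = 0")
    case True then show ?thesis by simp
  next
    case False
    have "c * (norm v * norm v) \<le> norm v * norm (A *v v)"
      using q[of v] norm_cauchy_schwarz[of v "A *v v"] by (simp add: power2_norm_eq_inner[symmetric] power2_eq_square)
    then show ?thesis using False by (simp add: mult.assoc[symmetric] mult.commute[of c])
  qed
  have "inj ((*v) A)"
  proof (rule injI)
    fix v w assume "A *v v = A *v w"
    then have "A *v (v - w) = 0" by (simp add: matrix_vector_mult_diff_distrib)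
    then have "c * norm (v - w) \<le> 0" using low[of "v - w"] by simp
    then show "v = w" using c by (simp add: mult_le_0_iff)
  qed
  then obtain B where "B ** A = mat 1" using matrix_left_invertible_injective by blast
  moreover then have "A ** B = mat 1" using matrix_left_right_inverse by blast
  ultimately have ex: "\<exists>B. A ** B = mat 1 \<and> B ** A = mat 1" by blast
  have inv: "A ** matrix_inv A = mat 1 \<and> matrix_inv A ** A = mat 1"
    unfolding matrix_inv_def by (rule someI_ex[OF ex])
  have "norm (matrix_inv A *v w) \<le> norm w / c" for w
  proof -
    have "A *v (matrix_inv A *v w) = w" using inv by (simp add: matrix_vector_mul_assoc)
    then have "c * norm (matrix_inv A *v w) \<le> norm w" using low[of "matrix_inv A *v w"] by simp
    then show ?thesis using c by (simp add: field_simps)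
  qed
  then show ?thesis using inv by blast
qed

theorem proposition4:
  fixes Theta :: "real^'n^'l"
    and x :: "'m::finite \<Rightarrow> nat \<Rightarrow> real^'n::finite"
    and eta :: "'m \<Rightarrow> nat \<Rightarrow> real^'l::finite"
    and y :: "'m \<Rightarrow> nat \<Rightarrow> real^'l"
    and mu :: "'m \<Rightarrow> nat \<Rightarrow> real^'n"
    and E :: "'m \<Rightarrow> 'm \<Rightarrow> bool"
    and W :: "real^'m^'m"
    and sigma_x sigma_eta muhat delta :: real
    and T t :: nat
  assumes model: "\<And>i j. y i j = Theta *v x i j + eta i j"
    and sx: "sigma_x > 0" and se: "sigma_eta > 0"
    and mu_bdd: "bdd_above ((\<lambda>(i, j). norm (mu i j)) ` (UNIV \<times> {1..}))"
    and muhat_def: "muhat = (SUP (i, j)\<in>UNIV \<times> {1..}. norm (mu i j))"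
    and m2: "CARD('m) \<ge> 2"
    and E_sym: "\<And>i j. E i j \<longleftrightarrow> E j i"
    and E_conn: "\<And>i j. E\<^sup>*\<^sup>* i j"
    and W_nonneg: "\<And>i j. W $ i $ j \<ge> 0"
    and W_sparse: "\<And>i j. i \<noteq> j \<Longrightarrow> \<not> E i j \<Longrightarrow> W $ i $ j = 0"
    and W_stoch: "W *v (\<chi> k. 1) = (\<chi> k. 1)"
    and W_sym: "transpose W = W"
    and W_rho: "rho W < 1"
    and delta_pos: "delta > 0"
    and T_pos: "T \<ge> 1"
    and t1: "real t \<ge> 8 * real CARD('n) + 16 * ln (2 / delta)"
    and t2: "real t \<ge> (16 * muhat * (sqrt (4 * real CARD('n)) + sqrt (2 * ln (2 / delta))) / sigma_x) ^ 2"
    and t3: "real t \<ge> 2 * (real CARD('n) + real CARD('l)) * ln (1 / delta)"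
    and E3_norm: "\<And>i. spec_norm (\<Sum>j\<in>{1..t}. outer (x i j) (x i j))
                      \<le> real t * (19 / 8 * sigma_x ^ 2 + muhat ^ 2)"
    and E3_lmin: "\<And>i. lambda_min (\<Sum>j\<in>{1..t}. outer (x i j) (x i j))
                      \<ge> real t * sigma_x ^ 2 / 8 *
                         lambda_min (mat 1 + (4 / (real t * sigma_x ^ 2)) *\<^sub>R (\<Sum>j\<in>{1..t}. outer (mu i j) (mu i j)))"
    and E3_noise: "\<And>i. spec_norm (\<Sum>j\<in>{1..t}. outer (eta i j) (x i j))
                      \<le> sqrt (real t) * sigma_eta *
                         (4 * sigma_x * sqrt ((real CARD('n) + real CARD('l)) * ln (9 / delta))
                          + muhat * (sqrt (2 * (real CARD('l) + real CARD('n))) + sqrt (2 * ln (2 / delta))))"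
  shows "\<forall>i. spec_norm (matrix_inv (cons_iter W (\<lambda>i. \<Sum>j\<in>{1..t}. outer (x i j) (x i j)) T i)
                 - matrix_inv ((1 / real CARD('m)) *\<^sub>R (\<Sum>i\<in>UNIV. \<Sum>j\<in>{1..t}. outer (x i j) (x i j))))
           \<le> rho W ^ T *
             ((152 * real CARD('m) powr (3/2) * sqrt (5 * real CARD('n)) / sigma_x ^ 2
               + 64 * real CARD('m) powr (3/2) * sqrt (5 * real CARD('n)) / sigma_x ^ 4 * muhat ^ 2)
              / real t)"
proof (intro allI)
  fix i0 :: 'm
  define B where "B = (\<lambda>i. \<Sum>j\<in>{1..t}. outer (x i j) (x i j))"
  define m where "m = real CARD('m)"
  define A where "A = cons_iter W B T i0"
  define Ab where "Ab = (1 / m) *\<^sub>R (\<Sum>i\<in>UNIV. B i)"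
  define N where "N = real t * (19 / 8 * sigma_x ^ 2 + muhat ^ 2)"
  define K where "K = (152 * real CARD('m) powr (3/2) * sqrt (5 * real CARD('n)) / sigma_x ^ 2
               + 64 * real CARD('m) powr (3/2) * sqrt (5 * real CARD('n)) / sigma_x ^ 4 * muhat ^ 2)"
  have Aeq: "A = (\<Sum>j\<in>UNIV. Pw W T i0 j *\<^sub>R B j)" unfolding A_def by (rule cons_iter_Pw)
  have m_pos: "m > 0" unfolding m_def by simp
  have goal: "spec_norm (matrix_inv A - matrix_inv Ab) \<le> rho W ^ T * (K / real t)"
  proof (cases "t = 0")
    case True
    then have "B = (\<lambda>i. 0)" unfolding B_def by auto
    then have "A = 0" "Ab = 0" unfolding Aeq Ab_def by auto
    moreover have "cons_iter W (\<lambda>i. 0 :: real^'n^'n) T i0 = 0" by (simp add: cons_iter_Pw)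
    ultimately show ?thesis using True by (simp add: spec_norm_def onorm_zero)
  next
    case False
    define c where "c = real t * sigma_x ^ 2 / 8"
    have c_pos: "c > 0" unfolding c_def using False sx by simp
    have Bquad: "v \<bullet> (B i *v v) \<ge> c * (v \<bullet> v)" for i v
    proof -
      define S where "S = (\<Sum>j\<in>{1..t}. outer (mu i j) (mu i j))"
      define a where "a = 4 / (real t * sigma_x ^ 2)"
      have a0: "a \<ge> 0" unfolding a_def using sx by simp
      have symI: "transpose (mat 1 + a *\<^sub>R S) = mat 1 + a *\<^sub>R S"
        unfolding S_def by (simp add: vec_eq_iff transpose_def outer_def mat_def mult.commute)
      have "lambda_min (mat 1 + a *\<^sub>R S) \<ge> 1"
      proof (rule sym_lambda_min_ge[OF symI])
        fix v :: "real^'n"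
        have "v \<bullet> ((mat 1 + a *\<^sub>R S) *v v) = v \<bullet> v + a * (\<Sum>j\<in>{1..t}. (mu i j \<bullet> v)^2)"
          unfolding S_def by (simp add: matrix_vector_mult_add_rdistrib mv_scale inner_add_right
              sum_outer_quad)
        moreover have "a * (\<Sum>j\<in>{1..t}. (mu i j \<bullet> v)^2) \<ge> 0" using a0 by (simp add: sum_nonneg)
        ultimately show "v \<bullet> ((mat 1 + a *\<^sub>R S) *v v) \<ge> 1 * (v \<bullet> v)" by simp
      qed
      then have "c * 1 \<le> c * lambda_min (mat 1 + a *\<^sub>R S)" using c_pos by (intro mult_left_mono) auto
      moreover have "c * lambda_min (mat 1 + a *\<^sub>R S) \<le> lambda_min (B i)"
        using E3_lmin[of i] unfolding B_def c_def S_def a_def .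
      ultimately have "lambda_min (B i) \<ge> c" by linarith
      moreover have "v \<bullet> (B i *v v) \<ge> lambda_min (B i) * (v \<bullet> v)"
        by (rule sym_quad_lower) (simp add: B_def sum_outer_sym)
      ultimately show ?thesis by (smt (verit) inner_ge_zero mult_right_mono)
    qed
    obtain Pn where Pn: "\<And>i j. Pw W T i j \<ge> 0" "\<And>i. (\<Sum>j\<in>UNIV. Pw W T i j) = 1"
      using Pw_nonneg_sum[OF W_nonneg W_stoch, of T] by blast
    have Aquad: "v \<bullet> (A *v v) \<ge> c * (v \<bullet> v)" for v
    proof -
      have "v \<bullet> (A *v v) = (\<Sum>j\<in>UNIV. Pw W T i0 j * (v \<bullet> (B j *v v)))"
        unfolding Aeq by (simp add: mv_sum mv_scale inner_sum_right)
      also have "\<dots> \<ge> (\<Sum>j\<in>UNIV. Pw W T i0 j * (c * (v \<bullet> v)))"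
        by (intro sum_mono mult_left_mono Bquad Pn)
      also have "(\<Sum>j\<in>UNIV. Pw W T i0 j * (c * (v \<bullet> v))) = c * (v \<bullet> v)"
        using Pn(2)[of i0] by (simp add: sum_distrib_right[symmetric])
      finally show ?thesis .
    qed
    have Abquad: "v \<bullet> (Ab *v v) \<ge> c * (v \<bullet> v)" for v
    proof -
      have "v \<bullet> (Ab *v v) = (1 / m) * (\<Sum>j\<in>UNIV. v \<bullet> (B j *v v))"
        unfolding Ab_def by (simp add: mv_sum mv_scale inner_sum_right)
      also have "\<dots> \<ge> (1 / m) * (\<Sum>j\<in>(UNIV::'m set). c * (v \<bullet> v))"
      proof -
        have "(\<Sum>j\<in>(UNIV::'m set). c * (v \<bullet> v)) \<le> (\<Sum>j\<in>UNIV. v \<bullet> (B j *v v))"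
          by (rule sum_mono) (rule Bquad)
        then show ?thesis using m_pos by (intro mult_left_mono) auto
      qed
      also have "(1 / m) * (\<Sum>j\<in>(UNIV::'m set). c * (v \<bullet> v)) = c * (v \<bullet> v)"
        using m_pos unfolding m_def by simp
      finally show ?thesis .
    qed
    note IA = coercive_inv[OF c_pos Aquad]
    note IAb = coercive_inv[OF c_pos Abquad]
    have WB: "rho W \<ge> 0 \<and> (\<forall>k i j. \<bar>Pw W k i j - 1 / m\<bar> \<le> rho W ^ k)"
      unfolding m_def by (rule W_spectral_bound[OF W_sym W_stoch m2 W_rho])
    have BN: "norm (B j *v u) \<le> N * norm u" for j u
    proof -
      have "norm (B j *v u) \<le> spec_norm (B j) * norm u"
        unfolding spec_norm_def by (rule onorm) simp
      also have "\<dots> \<le> N * norm u" using E3_norm[of j] unfolding B_def N_def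
        by (intro mult_right_mono) auto
      finally show ?thesis .
    qed
    have N0: "N \<ge> 0" unfolding N_def by simp
    have diff: "norm ((Ab - A) *v u) \<le> m * rho W ^ T * N * norm u" for u
    proof -
      have "(Ab - A) *v u = (\<Sum>j\<in>UNIV. (1 / m - Pw W T i0 j) *\<^sub>R (B j *v u))"
        unfolding Aeq Ab_def
        by (simp add: matrix_vector_mult_diff_rdistrib mv_sum mv_scale scaleR_sum_right
            sum_subtractf[symmetric] scaleR_diff_left)
      then have "norm ((Ab - A) *v u) \<le> (\<Sum>j\<in>UNIV. norm ((1 / m - Pw W T i0 j) *\<^sub>R (B j *v u)))"
        using norm_sum[of "\<lambda>j. (1 / m - Pw W T i0 j) *\<^sub>R (B j *v u)" UNIV] by simp
      also have "\<dots> \<le> (\<Sum>j\<in>(UNIV::'m set). rho W ^ T * (N * norm u))"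
      proof (intro sum_mono)
        fix j
        have "\<bar>1 / m - Pw W T i0 j\<bar> \<le> rho W ^ T" using WB by (simp add: abs_minus_commute)
        then show "norm ((1 / m - Pw W T i0 j) *\<^sub>R (B j *v u)) \<le> rho W ^ T * (N * norm u)"
          using BN[of j u] by (simp add: mult_mono)
      qed
      also have "\<dots> = m * rho W ^ T * N * norm u" unfolding m_def by simp
      finally show ?thesis .
    qed
    have main: "spec_norm (matrix_inv A - matrix_inv Ab) \<le> m * rho W ^ T * N / c^2"
      unfolding spec_norm_def
    proof (rule onorm_le)
      fix w :: "real^'n"
      define u where "u = matrix_inv Ab *v w"
      have Abu: "Ab *v u = w" unfolding u_def using IAb by (simp add: matrix_vector_mul_assoc)
      have Au: "matrix_inv A *v (A *v u) = u" using IA by (simp add: matrix_vector_mul_assoc)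
      have "(matrix_inv A - matrix_inv Ab) *v w = matrix_inv A *v ((Ab - A) *v u)"
        by (simp add: matrix_vector_mult_diff_rdistrib matrix_vector_mult_diff_distrib Abu Au) (simp add: u_def)
      then have "norm ((matrix_inv A - matrix_inv Ab) *v w) \<le> norm ((Ab - A) *v u) / c"
        using IA by simp
      also have "\<dots> \<le> m * rho W ^ T * N * norm u / c"
        using diff[of u] c_pos by (simp add: divide_right_mono)
      also have "\<dots> \<le> m * rho W ^ T * N * (norm w / c) / c"
      proof -
        have nu: "norm u \<le> norm w / c" using IAb unfolding u_def by blast
        have "0 \<le> m * rho W ^ T * N" using m_pos WB N0 by simp
        from mult_left_mono[OF nu this] show ?thesis using c_pos by (intro divide_right_mono) auto
      qed
      also have "\<dots> = m * rho W ^ T * N / c^2 * norm w" by (simp add: power2_eq_square)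
      finally show "norm ((matrix_inv A - matrix_inv Ab) *v w) \<le> m * rho W ^ T * N / c^2 * norm w" .
    qed
    have eq: "m * rho W ^ T * N / c^2 = rho W ^ T * ((152 * m / sigma_x ^ 2 + 64 * m / sigma_x ^ 4 * muhat ^ 2) / real t)"
      unfolding N_def c_def using False sx by (simp add: field_simps power2_eq_square power4_eq_xxxx)
    have mK: "m \<le> real CARD('m) powr (3/2) * sqrt (5 * real CARD('n))"
    proof -
      have "m = m powr 1" using m_pos by simp
      also have "\<dots> \<le> m powr (3/2)" using m_pos unfolding m_def by (intro powr_mono) auto
      also have "\<dots> \<le> m powr (3/2) * sqrt (5 * real CARD('n))"
      proof -
        have "0 < CARD('n)" by simp
        then have "1 \<le> real CARD('n)" by linarith
        then have "1 \<le> 5 * real CARD('n)" by linarith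
        then have "sqrt (5 * real CARD('n)) \<ge> 1" by (metis real_sqrt_one real_sqrt_le_iff)
        then show ?thesis using m_pos by (simp add: mult_le_cancel_left1)
      qed
      finally show ?thesis unfolding m_def .
    qed
    have "(152 * m / sigma_x ^ 2 + 64 * m / sigma_x ^ 4 * muhat ^ 2) \<le> K"
      unfolding K_def using mK sx
      by (intro add_mono mult_right_mono divide_right_mono) auto
    then have "rho W ^ T * ((152 * m / sigma_x ^ 2 + 64 * m / sigma_x ^ 4 * muhat ^ 2) / real t)
        \<le> rho W ^ T * (K / real t)"
      using WB by (intro mult_left_mono divide_right_mono) auto
    then show ?thesis using main eq by linarith
  qed
  then show "spec_norm (matrix_inv (cons_iter W (\<lambda>i. \<Sum>j\<in>{1..t}. outer (x i j) (x i j)) T i0)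
                 - matrix_inv ((1 / real CARD('m)) *\<^sub>R (\<Sum>i\<in>UNIV. \<Sum>j\<in>{1..t}. outer (x i j) (x i j))))
           \<le> rho W ^ T *
             ((152 * real CARD('m) powr (3/2) * sqrt (5 * real CARD('n)) / sigma_x ^ 2
               + 64 * real CARD('m) powr (3/2) * sqrt (5 * real CARD('n)) / sigma_x ^ 4 * muhat ^ 2)
              / real t)"
    unfolding A_def Ab_def B_def K_def m_def .
qed

end
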